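(* For the hop-constrained minimum spanning tree problem (HMSTP), i.e. the HSTP with $R=V$, the partial-ordering model (P-HSTP) is strictly stronger than the assignment model (A-HSTP): for every HMSTP instance $\nu_{\text{P-HSTP}}\ge\nu_{\text{A-HSTP}}$, and there exist HMSTP instances for which this inequality is strict.
   Context: HMSTP instance: a complete undirected graph $G=(V,E)$ with edge costs $c:E\to\mathbb{R}_{>0}$, a root $r\in V$, a hop limit $H\ge1$, and terminal set $R=V$. For every ordered pair $(u,v)$ of distinct nodes there is a variable $x_{u,v}$. Common $x$-constraints: (X1) $\sum_{u\neq v}x_{u,v}\le1$ for all $v\in V$; (X2) $\sum_{u\in V\setminus\{v,w\}}x_{u,v}\ge x_{v,w}$ for all $v\in V\setminus\{r\}$, $w\neq v$; (X3) $0\le x_{u,v}\le1$; (X4) $\sum_{u\neq v}x_{u,v}\ge1$ for all $v\in R\setminus\{r\}$. $\mathcal{P}^{HSTP}$: all $(x,l,g)$ (with $l_{v,i},g_{i,v}$ for $v\in V$, $i=0,\dots,H$) satisfying (X1)–(X4) and $l_{r,0}=g_{0,r}=0$; $l_{v,1}=g_{H,v}=0$ for $v\neq r$; $l_{v,i}\le l_{v,i+1}$ and $g_{i,v}+l_{v,i+1}=1$ for $v\in V$, $i=0,\dots,H-1$; $l_{u,i}+g_{i,v}\ge x_{u,v}$ for $u\neq v$, $i=0,\dots,H$; $0\le l,g\le1$. $\mathcal{A}^{HSTP}$: all $(x,y)$ (with $y_{v,i}$ for $v\in V$, $i=0,\dots,H$) satisfying (X1)–(X4) and $y_{r,0}=1$;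 $y_{r,i}=0$ for $i\ge1$; $y_{v,0}=0$ and $\sum_{i=1}^Hy_{v,i}=1$ for $v\neq r$; $y_{u,i}-y_{v,i+1}+x_{u,v}\le1$ for $u\neq v$, $i=0,\dots,H-1$; $y_{u,H}+x_{u,v}\le1$ for $u\neq v$; $0\le y\le1$. (A-HSTP) and (P-HSTP) minimize $\sum_{uv\in E}c_{uv}(x_{u,v}+x_{v,u})$ over the integral points of $\mathcal{A}^{HSTP}$ and $\mathcal{P}^{HSTP}$ respectively. $\nu_M$ is the optimal value of the LP relaxation of ILP $M$. For a minimization problem, model $A$ is strictly stronger than $B$ if $\nu_A\ge\nu_B$ on all instances and strict inequality holds for some instance. *)

theory Defs
  imports Complex_Main
begin

text \<open>HMSTP instance: complete graph on finite vertex set V, edge costs c on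
  two-element sets {u,v}, root r, hop limit H, terminal set R = V.
  x u v is the arc variable x_{u,v}; l v i = l_{v,i}; g i v = g_{i,v}; y v i = y_{v,i}.\<close>

definition hmstp_instance :: "'a set \<Rightarrow> ('a set \<Rightarrow> real) \<Rightarrow> 'a \<Rightarrow> nat \<Rightarrow> bool" where
  "hmstp_instance V c r H \<longleftrightarrow> finite V \<and> r \<in> V \<and> H \<ge> 1 \<and>
     (\<forall>u\<in>V. \<forall>v\<in>V. u \<noteq> v \<longrightarrow> c {u, v} > 0)"

definition x_constraints :: "'a set \<Rightarrow> 'a \<Rightarrow> ('a \<Rightarrow> 'a \<Rightarrow> real) \<Rightarrow> bool" where
  "x_constraints V r x \<longleftrightarrow>
     (\<forall>v\<in>V. (\<Sum>u\<in>V - {v}. x u v) \<le> 1) \<and>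
     (\<forall>v\<in>V - {r}. \<forall>w\<in>V - {v}. (\<Sum>u\<in>V - {v, w}. x u v) \<ge> x v w) \<and>
     (\<forall>u\<in>V. \<forall>v\<in>V. u \<noteq> v \<longrightarrow> 0 \<le> x u v \<and> x u v \<le> 1) \<and>
     (\<forall>v\<in>V - {r}. (\<Sum>u\<in>V - {v}. x u v) \<ge> 1)"

definition P_HSTP :: "'a set \<Rightarrow> 'a \<Rightarrow> nat \<Rightarrow> ('a \<Rightarrow> 'a \<Rightarrow> real) \<Rightarrow>
    ('a \<Rightarrow> nat \<Rightarrow> real) \<Rightarrow> (nat \<Rightarrow> 'a \<Rightarrow> real) \<Rightarrow> bool" where
  "P_HSTP V r H x l g \<longleftrightarrow> x_constraints V r x \<and>
     l r 0 = 0 \<and> g 0 r = 0 \<and>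
     (\<forall>v\<in>V - {r}. l v 1 = 0 \<and> g H v = 0) \<and>
     (\<forall>v\<in>V. \<forall>i<H. l v i \<le> l v (i + 1) \<and> g i v + l v (i + 1) = 1) \<and>
     (\<forall>u\<in>V. \<forall>v\<in>V. u \<noteq> v \<longrightarrow> (\<forall>i\<le>H. l u i + g i v \<ge> x u v)) \<and>
     (\<forall>v\<in>V. \<forall>i\<le>H. 0 \<le> l v i \<and> l v i \<le> 1 \<and> 0 \<le> g i v \<and> g i v \<le> 1)"

definition A_HSTP :: "'a set \<Rightarrow> 'a \<Rightarrow> nat \<Rightarrow> ('a \<Rightarrow> 'a \<Rightarrow> real) \<Rightarrow>
    ('a \<Rightarrow> nat \<Rightarrow> real) \<Rightarrow> bool" where
  "A_HSTP V r H x y \<longleftrightarrow> x_constraints V r x \<and>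
     y r 0 = 1 \<and> (\<forall>i\<in>{1..H}. y r i = 0) \<and>
     (\<forall>v\<in>V - {r}. y v 0 = 0 \<and> (\<Sum>i=1..H. y v i) = 1) \<and>
     (\<forall>u\<in>V. \<forall>v\<in>V. u \<noteq> v \<longrightarrow>
        (\<forall>i<H. y u i - y v (i + 1) + x u v \<le> 1) \<and> y u H + x u v \<le> 1) \<and>
     (\<forall>v\<in>V. \<forall>i\<le>H. 0 \<le> y v i \<and> y v i \<le> 1)"

text \<open>Objective: sum over edges uv of c_uv (x_{u,v} + x_{v,u}), written as a sum over
  ordered pairs of distinct nodes (each edge is counted once per orientation).\<close>
definition hstp_cost :: "'a set \<Rightarrow> ('a set \<Rightarrow> real) \<Rightarrow> ('a \<Rightarrow> 'a \<Rightarrow> real) \<Rightarrow> real" where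
  "hstp_cost V c x = (\<Sum>(u, v)\<in>{(u, v). u \<in> V \<and> v \<in> V \<and> u \<noteq> v}. c {u, v} * x u v)"

definition nu_P :: "'a set \<Rightarrow> ('a set \<Rightarrow> real) \<Rightarrow> 'a \<Rightarrow> nat \<Rightarrow> real" where
  "nu_P V c r H = Inf {hstp_cost V c x | x l g. P_HSTP V r H x l g}"

definition nu_A :: "'a set \<Rightarrow> ('a set \<Rightarrow> real) \<Rightarrow> 'a \<Rightarrow> nat \<Rightarrow> real" where
  "nu_A V c r H = Inf {hstp_cost V c x | x y. A_HSTP V r H x y}"

end

theory Submission
  imports Defs
begin


primrec lv :: "'a set \<Rightarrow> 'a \<Rightarrow> nat \<Rightarrow> ('a \<Rightarrow> 'a \<Rightarrow> real) \<Rightarrow> ('a \<Rightarrow> nat \<Rightarrow> real) \<Rightarrow> nat \<Rightarrow> ('a \<Rightarrow> real) \<times> ('a \<Rightarrow> real)" where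
  "lv V r H x l 0 = ((\<lambda>v. if v = r then 1 else 0), (\<lambda>v. 0))"
| "lv V r H x l (Suc i) =
    (let p = fst (lv V r H x l i); C = snd (lv V r H x l i);
         pn = (\<lambda>v. if v = r then 0 else max (Max (insert 0 ((\<lambda>u. p u + x u v - 1) ` (V - {v}))))
                   (1 - C v - (\<Sum>j\<in>{Suc i..<H}. 1 - l v (Suc j))))
     in (pn, (\<lambda>v. C v + pn v)))"

definition pp where "pp V r H x l i v = fst (lv V r H x l i) v"
definition CC where "CC V r H x l i v = snd (lv V r H x l i) v"
definition ff where "ff V r H x l i v = Max (insert 0 ((\<lambda>u. pp V r H x l i u + x u v - 1) ` (V - {v})))"
definition TT where "TT H l i v = (\<Sum>j\<in>{i..<H}. 1 - l v (Suc j))"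

lemma pp_0: "pp V r H x l 0 v = (if v = r then 1 else 0)" by (simp add: pp_def)
lemma CC_0: "CC V r H x l 0 v = 0" by (simp add: CC_def)
lemma pp_Suc: "pp V r H x l (Suc i) v = (if v = r then 0 else max (ff V r H x l i v) (1 - CC V r H x l i v - TT H l (Suc i) v))"
  by (simp add: pp_def ff_def CC_def TT_def Let_def)
lemma CC_Suc: "CC V r H x l (Suc i) v = CC V r H x l i v + pp V r H x l (Suc i) v"
  by (simp add: pp_def CC_def Let_def)

lemma seq_bound:
  fixes Cs fs Us :: "nat \<Rightarrow> real"
  assumes C0: "Cs 0 = 0"
    and rec: "\<And>j. Cs (Suc j) = max (Cs j + fs j) (1 - (\<Sum>m\<in>{Suc j..<H}. Us (Suc m)))"
    and fU: "\<And>j. j < k \<Longrightarrow> fs j \<le> Us (Suc j)"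
    and U0: "\<And>m. m < H \<Longrightarrow> 0 \<le> Us (Suc m)"
    and cum: "(\<Sum>j<k. fs j) \<le> 1" and kH: "k \<le> H"
  shows "i \<le> k \<Longrightarrow> Cs i + (\<Sum>j\<in>{i..<k}. fs j) \<le> 1"
proof (induction i)
  case 0
  then show ?case using C0 cum by (simp add: atLeast0LessThan)
next
  case (Suc i)
  then have ik: "i < k" by simp
  have IH: "Cs i + (\<Sum>j\<in>{i..<k}. fs j) \<le> 1" using Suc by simp
  have split: "(\<Sum>j\<in>{i..<k}. fs j) = fs i + (\<Sum>j\<in>{Suc i..<k}. fs j)"
    using ik by (simp add: sum.atLeast_Suc_lessThan)
  have b1: "(\<Sum>j\<in>{Suc i..<k}. fs j) \<le> (\<Sum>j\<in>{Suc i..<k}. Us (Suc j))"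
    by (rule sum_mono) (use fU in auto)
  have b2: "(\<Sum>j\<in>{Suc i..<k}. Us (Suc j)) \<le> (\<Sum>j\<in>{Suc i..<H}. Us (Suc j))"
    by (rule sum_mono2) (use kH U0 in auto)
  show ?case unfolding rec using IH split b1 b2 by (simp add: max_def)
qed

lemma sum_pos_part:
  fixes a :: "nat \<Rightarrow> real"
  assumes "finite S" "\<And>j. j \<in> S \<Longrightarrow> 0 \<le> a j" "0 \<le> d"
  shows "(\<Sum>j\<in>S. max 0 (a j - d)) \<le> max 0 ((\<Sum>j\<in>S. a j) - d)"
  using assms
proof (induction S rule: finite_induct)
  case empty
  then show ?case by simp
next
  case (insert k S)
  have IH: "(\<Sum>j\<in>S. max 0 (a j - d)) \<le> max 0 ((\<Sum>j\<in>S. a j) - d)" using insert by auto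
  have ak: "0 \<le> a k" using insert by auto
  have sS: "0 \<le> (\<Sum>j\<in>S. a j)" using insert by (auto intro: sum_nonneg)
  define s where "s = (\<Sum>j\<in>S. max 0 (a j - d))"
  have "max 0 (a k - d) + s \<le> max 0 (a k + sum a S - d)"
    using IH ak sS \<open>0 \<le> d\<close> unfolding s_def[symmetric] by (auto simp: max_def split: if_splits)
  then show ?case using insert(1,2) s_def by simp
qed

locale ctx =
  fixes V :: "'a set" and r :: 'a and H :: nat and x :: "'a \<Rightarrow> 'a \<Rightarrow> real"
    and l :: "'a \<Rightarrow> nat \<Rightarrow> real" and g :: "nat \<Rightarrow> 'a \<Rightarrow> real"
  assumes fin: "finite V" and rV: "r \<in> V" and H1: "1 \<le> H" and PH: "P_HSTP V r H x l g"
begin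

abbreviation p where "p \<equiv> pp V r H x l"
abbreviation C where "C \<equiv> CC V r H x l"
abbreviation f where "f \<equiv> ff V r H x l"
abbreviation T where "T \<equiv> TT H l"

lemma xc: "x_constraints V r x" using PH by (simp add: P_HSTP_def)

lemma x01: "u \<in> V \<Longrightarrow> v \<in> V \<Longrightarrow> u \<noteq> v \<Longrightarrow> 0 \<le> x u v \<and> x u v \<le> 1"
  using xc unfolding x_constraints_def by blast

lemma indeg: "v \<in> V \<Longrightarrow> v \<noteq> r \<Longrightarrow> (\<Sum>u\<in>V-{v}. x u v) = 1"
proof -
  assume a: "v \<in> V" "v \<noteq> r"
  have "(\<Sum>u\<in>V-{v}. x u v) \<le> 1" using xc a unfolding x_constraints_def by blast
  moreover have "(\<Sum>u\<in>V-{v}. x u v) \<ge> 1" using xc a unfolding x_constraints_def by blast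
  ultimately show ?thesis by simp
qed

lemma xle: "u \<in> V \<Longrightarrow> v \<in> V \<Longrightarrow> u \<noteq> v \<Longrightarrow> i \<le> H \<Longrightarrow> x u v \<le> l u i + g i v"
  using PH unfolding P_HSTP_def by blast

lemma gl: "v \<in> V \<Longrightarrow> i < H \<Longrightarrow> g i v + l v (Suc i) = 1 \<and> l v i \<le> l v (Suc i)"
  using PH unfolding P_HSTP_def by simp

lemma l01: "v \<in> V \<Longrightarrow> i \<le> H \<Longrightarrow> 0 \<le> l v i \<and> l v i \<le> 1"
  using PH unfolding P_HSTP_def by blast

lemma lv1: "v \<in> V \<Longrightarrow> v \<noteq> r \<Longrightarrow> l v 1 = 0"
  using PH by (simp add: P_HSTP_def)

lemma xr0: "u \<in> V \<Longrightarrow> u \<noteq> r \<Longrightarrow> x u r = 0"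
proof -
  assume u: "u \<in> V" "u \<noteq> r"
  have a: "l u 0 + g 0 r \<ge> x u r" using xle[of u r 0] u rV by simp
  have b: "g 0 r = 0" using PH by (simp add: P_HSTP_def)
  have c: "l u 0 \<le> l u 1" using gl[of u 0] u H1 by simp
  have d: "l u 1 = 0" using lv1 u by simp
  show ?thesis using a b c d x01[of u r] u rV by auto
qed

lemma F4: "u \<in> V \<Longrightarrow> v \<in> V \<Longrightarrow> u \<noteq> v \<Longrightarrow> i < H \<Longrightarrow> x u v \<le> l u i + 1 - l v (Suc i)"
proof -
  assume a: "u \<in> V" "v \<in> V" "u \<noteq> v" "i < H"
  have "g i v + l v (i + 1) = 1" using gl[of v i] a by simp
  moreover have "l u i + g i v \<ge> x u v" using xle[of u v i] a by simp
  ultimately show ?thesis by simp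
qed

lemma F6: "u \<in> V \<Longrightarrow> u \<noteq> r \<Longrightarrow> v \<in> V \<Longrightarrow> v \<noteq> u \<Longrightarrow> x u v \<le> l u H"
proof -
  assume a: "u \<in> V" "u \<noteq> r" "v \<in> V" "v \<noteq> u"
  show ?thesis
  proof (cases "v = r")
    case True
    then show ?thesis using xr0 a l01[of u H] by simp
  next
    case False
    have "l u H + g H v \<ge> x u v" using xle[of u v H] a by simp
    moreover have "g H v = 0" using PH a False unfolding P_HSTP_def by blast
    ultimately show ?thesis by simp
  qed
qed


lemma p_root: "p i r = (if i = 0 then 1 else 0)"
  by (cases i) (simp_all add: pp_0 pp_Suc)

lemma f_nonneg: "0 \<le> f i v"
  unfolding ff_def using fin by (auto intro: Max_ge)

lemma f_ge: "u \<in> V \<Longrightarrow> u \<noteq> v \<Longrightarrow> p i u + x u v - 1 \<le> f i v"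
  unfolding ff_def using fin by (auto intro: Max_ge)

lemma p_nonneg: "v \<noteq> r \<Longrightarrow> 0 \<le> p i v"
proof (cases i)
  case 0
  then show ?thesis by (simp add: pp_0)
next
  case (Suc j)
  assume "v \<noteq> r"
  then show ?thesis using Suc f_nonneg[of j v] by (simp add: pp_Suc)
qed

lemma p_nonneg_all: "0 \<le> p i v"
  using p_nonneg[of v i] p_root[of i] by (cases "v = r") auto

lemma C_rec: "v \<noteq> r \<Longrightarrow> C (Suc j) v = max (C j v + f j v) (1 - T (Suc j) v)"
  by (simp add: CC_Suc pp_Suc max_def)

lemma C_sum: "v \<noteq> r \<Longrightarrow> C i v = (\<Sum>j\<le>i. p j v)"
  by (induction i) (simp_all add: CC_0 pp_0 CC_Suc)

lemma root_sum: "(\<Sum>j\<le>i. p j r) = 1"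
  by (induction i) (simp_all add: p_root)

lemma f_le_sum: "f i v \<le> (\<Sum>u\<in>V-{v}. max 0 (p i u + x u v - 1))"
proof -
  have fin2: "finite (V - {v})" using fin by simp
  have "\<forall>a\<in>insert 0 ((\<lambda>u. p i u + x u v - 1) ` (V - {v})). a \<le> (\<Sum>u\<in>V-{v}. max 0 (p i u + x u v - 1))"
  proof
    fix a assume "a \<in> insert 0 ((\<lambda>u. p i u + x u v - 1) ` (V - {v}))"
    then consider "a = 0" | u where "u \<in> V - {v}" "a = p i u + x u v - 1" by auto
    then show "a \<le> (\<Sum>u\<in>V-{v}. max 0 (p i u + x u v - 1))"
    proof cases
      case 1
      then show ?thesis by (simp add: sum_nonneg)
    next
      case 2
      have "max 0 (p i u + x u v - 1) \<le> (\<Sum>u\<in>V-{v}. max 0 (p i u + x u v - 1))"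
        by (rule member_le_sum) (use 2 fin2 in auto)
      then show ?thesis using 2 by simp
    qed
  qed
  then show ?thesis unfolding ff_def using fin2 by (subst Max_le_iff) auto
qed

lemma T_nonneg: "0 \<le> T i v" if "v \<in> V"
  unfolding TT_def using l01 that by (auto intro!: sum_nonneg)

lemma CT: "v \<in> V \<Longrightarrow> v \<noteq> r \<Longrightarrow> i < H \<Longrightarrow> 1 \<le> C i v + T i v"
proof (cases i)
  case 0
  assume v: "v \<in> V" "v \<noteq> r" "i < H"
  have "T 0 v = (1 - l v (Suc 0)) + T 1 v"
    unfolding TT_def using H1 by (simp add: sum.atLeast_Suc_lessThan)
  then show ?thesis using 0 v lv1 T_nonneg[of v 1] by (simp add: CC_0)
next
  case (Suc j)
  assume v: "v \<in> V" "v \<noteq> r" "i < H"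
  then show ?thesis using Suc C_rec[of v j] by simp
qed

lemma T_split: "i < H \<Longrightarrow> T i v = (1 - l v (Suc i)) + T (Suc i) v"
  unfolding TT_def by (simp add: sum.atLeast_Suc_lessThan)

lemma inv: "i \<le> H \<Longrightarrow> \<forall>v\<in>V-{r}. (1 \<le> i \<longrightarrow> p i v \<le> 1 - l v i) \<and> C i v \<le> 1 \<and> (\<forall>j<i. f j v \<le> 1 - l v (Suc j))"
proof (induction i)
  case 0
  then show ?case by (simp add: CC_0)
next
  case (Suc i)
  have iH: "i < H" using Suc by simp
  have IH: "\<forall>v\<in>V-{r}. (1 \<le> i \<longrightarrow> p i v \<le> 1 - l v i) \<and> C i v \<le> 1 \<and> (\<forall>j<i. f j v \<le> 1 - l v (Suc j))"
    using Suc by simp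
  show ?case
  proof
    fix v assume vV: "v \<in> V - {r}"
    have lvS: "0 \<le> l v (Suc i) \<and> l v (Suc i) \<le> 1" using l01 vV iH by simp
    have fb: "f i v \<le> 1 - l v (Suc i)"
    proof -
      have "\<forall>a\<in>insert 0 ((\<lambda>u. p i u + x u v - 1) ` (V - {v})). a \<le> 1 - l v (Suc i)"
      proof
        fix a assume "a \<in> insert 0 ((\<lambda>u. p i u + x u v - 1) ` (V - {v}))"
        then consider "a = 0" | u where "u \<in> V - {v}" "a = p i u + x u v - 1" by auto
        then show "a \<le> 1 - l v (Suc i)"
        proof cases
          case 1
          then show ?thesis using lvS by simp
        next
          case 2
          have xuv: "0 \<le> x u v \<and> x u v \<le> 1" using x01[of u v] 2 vV by auto
          show ?thesis
          proof (cases "u = r")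
            case True
            show ?thesis
            proof (cases i)
              case 0
              then show ?thesis using 2 True xuv lv1[of v] vV by (simp add: p_root)
            next
              case (Suc i')
              then show ?thesis using 2 True xuv lvS by (simp add: p_root)
            qed
          next
            case False
            show ?thesis
            proof (cases i)
              case 0
              then show ?thesis using 2 False xuv lvS by (simp add: pp_0)
            next
              case (Suc i')
              have "p i u \<le> 1 - l u i" using IH 2 False Suc by auto
              moreover have "x u v \<le> l u i + 1 - l v (Suc i)" using F4[of u v i] 2 vV iH by auto
              ultimately show ?thesis using 2 by simp
            qed
          qed
        qed
      qed
      then show ?thesis unfolding ff_def using fin by (subst Max_le_iff) auto
    qed
    have cum: "(\<Sum>j<Suc i. f j v) \<le> 1"
    proof -
      have "(\<Sum>j<Suc i. f j v) \<le> (\<Sum>j<Suc i. \<Sum>u\<in>V-{v}. max 0 (p j u + x u v - 1))"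
        by (rule sum_mono) (rule f_le_sum)
      also have "\<dots> = (\<Sum>u\<in>V-{v}. \<Sum>j<Suc i. max 0 (p j u - (1 - x u v)))"
        by (subst sum.swap) (simp add: algebra_simps)
      also have "\<dots> \<le> (\<Sum>u\<in>V-{v}. x u v)"
      proof (rule sum_mono)
        fix u assume u: "u \<in> V - {v}"
        have xuv: "0 \<le> x u v \<and> x u v \<le> 1" using x01[of u v] u vV by auto
        have s1: "(\<Sum>j<Suc i. p j u) \<le> 1"
        proof (cases "u = r")
          case True
          then show ?thesis using root_sum[of i] by (simp add: lessThan_Suc_atMost)
        next
          case False
          then have "(\<Sum>j<Suc i. p j u) = C i u" using C_sum[of u i] by (simp add: lessThan_Suc_atMost)
          then show ?thesis using IH u False by auto
        qed
        have "(\<Sum>j<Suc i. max 0 (p j u - (1 - x u v))) \<le> max 0 ((\<Sum>j<Suc i. p j u) - (1 - x u v))"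
          by (rule sum_pos_part) (use p_nonneg_all xuv in auto)
        also have "\<dots> \<le> x u v" using s1 xuv by simp
        finally show "(\<Sum>j<Suc i. max 0 (p j u - (1 - x u v))) \<le> x u v" .
      qed
      also have "\<dots> = 1" using indeg vV by simp
      finally show ?thesis .
    qed
    have Cf: "C i v + f i v \<le> 1"
    proof -
      have "C i v + (\<Sum>j\<in>{i..<Suc i}. f j v) \<le> 1"
      proof (rule seq_bound[where Us = "\<lambda>m. 1 - l v m" and H = H and k = "Suc i"])
        show "C 0 v = 0" by (simp add: CC_0)
        show "\<And>j. C (Suc j) v = max (C j v + f j v) (1 - (\<Sum>m\<in>{Suc j..<H}. 1 - l v (Suc m)))"
          using C_rec vV unfolding TT_def by simp
        show "\<And>j. j < Suc i \<Longrightarrow> f j v \<le> 1 - l v (Suc j)"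
          using IH vV fb less_Suc_eq by auto
        show "\<And>m. m < H \<Longrightarrow> 0 \<le> 1 - l v (Suc m)" using l01 vV by auto
        show "(\<Sum>j<Suc i. f j v) \<le> 1" by (rule cum)
        show "Suc i \<le> H" using Suc by simp
        show "i \<le> Suc i" by simp
      qed
      then show ?thesis by simp
    qed
    have pS: "p (Suc i) v = max (f i v) (1 - C i v - T (Suc i) v)" using vV by (simp add: pp_Suc)
    have ct: "1 \<le> C i v + T i v" using CT vV iH by simp
    have p1: "p (Suc i) v \<le> 1 - l v (Suc i)"
      using pS fb ct T_split[OF iH, of v] by simp
    have c1: "C (Suc i) v \<le> 1"
      using C_rec[of v i] vV Cf T_nonneg[of v "Suc i"] by simp
    show "(1 \<le> Suc i \<longrightarrow> p (Suc i) v \<le> 1 - l v (Suc i)) \<and> C (Suc i) v \<le> 1 \<and> (\<forall>j<Suc i. f j v \<le> 1 - l v (Suc j))"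
      using p1 c1 IH vV fb less_Suc_eq by auto
  qed
qed

lemma A_exists: "A_HSTP V r H x (\<lambda>v i. p i v)"
proof -
  have Hpos: "H = Suc (H - 1)" using H1 by simp
  have ple: "v \<in> V \<Longrightarrow> i \<le> H \<Longrightarrow> p i v \<le> 1" for v i
  proof (cases "v = r")
    case True then show ?thesis by (simp add: p_root)
  next
    case False
    assume a: "v \<in> V" "i \<le> H"
    show ?thesis
    proof (cases i)
      case 0 then show ?thesis using False by (simp add: pp_0)
    next
      case (Suc j)
      then have "p i v \<le> 1 - l v i" using inv[of i] a False by auto
      then show ?thesis using l01[of v i] a by simp
    qed
  qed
  have sum1: "v \<in> V \<Longrightarrow> v \<noteq> r \<Longrightarrow> (\<Sum>i=1..H. p i v) = 1" for v
  proof -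
    assume v: "v \<in> V" "v \<noteq> r"
    have "(\<Sum>i\<le>H. p i v) = p 0 v + (\<Sum>i=1..H. p i v)"
      by (simp add: atMost_atLeast0 sum.atLeast_Suc_atMost)
    then have e: "(\<Sum>i=1..H. p i v) = C H v" using C_sum[of v H] v by (simp add: pp_0)
    have "C H v \<le> 1" using inv[of H] v by auto
    moreover have "1 \<le> C H v"
    proof -
      have "C H v = max (C (H-1) v + f (H-1) v) (1 - T H v)" using C_rec[of v "H-1"] v Hpos by simp
      moreover have "T H v = 0" unfolding TT_def by simp
      ultimately show ?thesis by simp
    qed
    ultimately show ?thesis using e by simp
  qed
  show ?thesis
    unfolding A_HSTP_def
  proof (intro conjI)
    show "x_constraints V r x" by (rule xc)
    show "p 0 r = 1" by (simp add: p_root)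
    show "\<forall>i\<in>{1..H}. p i r = 0" by (simp add: p_root)
    show "\<forall>v\<in>V - {r}. p 0 v = 0 \<and> (\<Sum>i = 1..H. p i v) = 1" using sum1 by (simp add: pp_0)
    show "\<forall>u\<in>V. \<forall>v\<in>V. u \<noteq> v \<longrightarrow> (\<forall>i<H. p i u - p (i + 1) v + x u v \<le> 1) \<and> p H u + x u v \<le> 1"
    proof (intro ballI impI conjI allI)
      fix u v i assume uv: "u \<in> V" "v \<in> V" "u \<noteq> v" and iH: "i < H"
      show "p i u - p (i + 1) v + x u v \<le> 1"
      proof (cases "v = r")
        case True
        then show ?thesis using xr0[of u] uv ple[of u i] iH by (simp add: p_root)
      next
        case False
        have "p i u + x u v - 1 \<le> f i v" using f_ge uv by simp
        moreover have "f i v \<le> p (Suc i) v" using False by (simp add: pp_Suc)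
        ultimately show ?thesis by simp
      qed
    next
      fix u v assume uv: "u \<in> V" "v \<in> V" "u \<noteq> v"
      show "p H u + x u v \<le> 1"
      proof (cases "u = r")
        case True
        then show ?thesis using x01[of u v] uv Hpos by (simp add: p_root)
      next
        case False
        have "p H u \<le> 1 - l u H" using inv[of H] uv False H1 by auto
        moreover have "x u v \<le> l u H" using F6[of u v] uv False by auto
        ultimately show ?thesis by simp
      qed
    qed
    show "\<forall>v\<in>V. \<forall>i\<le>H. 0 \<le> p i v \<and> p i v \<le> 1" using ple p_nonneg_all by auto
  qed
qed

end




lemma cost_expand:
  assumes "finite V"
  shows "hstp_cost V c x = (\<Sum>u\<in>V. \<Sum>v\<in>V-{u}. c {u, v} * x u v)"
proof -
  have e: "{(u, v). u \<in> V \<and> v \<in> V \<and> u \<noteq> v} = Sigma V (\<lambda>u. V - {u})" by auto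
  show ?thesis unfolding hstp_cost_def e using assms by (simp add: sum.Sigma)
qed

lemma cost_nonneg:
  assumes "hmstp_instance V c r H" "x_constraints V r x"
  shows "0 \<le> hstp_cost V c x"
  unfolding hstp_cost_def
proof (rule sum_nonneg)
  fix z assume z: "z \<in> {(u, v). u \<in> V \<and> v \<in> V \<and> u \<noteq> v}"
  then obtain u v where uv: "z = (u, v)" "u \<in> V" "v \<in> V" "u \<noteq> v" by auto
  have "0 < c {u, v}" using assms(1) uv unfolding hmstp_instance_def by auto
  moreover have "0 \<le> x u v" using assms(2) uv unfolding x_constraints_def by auto
  ultimately show "0 \<le> (case z of (u, v) \<Rightarrow> c {u, v} * x u v)" using uv by simp
qed

lemma star_P:
  assumes "finite V" "r \<in> V" "1 \<le> H"
  shows "P_HSTP V r H (\<lambda>u v. if u = r \<and> v \<noteq> r then 1 else 0)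
     (\<lambda>v i. if v = r then (if 1 \<le> i then 1 else 0) else (if 2 \<le> i then 1 else 0))
     (\<lambda>i v. if v = r then 0 else (if i = 0 then 1 else 0))"
proof -
  have s1: "v \<in> V \<Longrightarrow> (\<Sum>u\<in>V - {v}. if u = r \<and> v \<noteq> r then 1 else (0::real)) = (if v = r then 0 else 1)" for v
  proof (cases "v = r")
    case True then show ?thesis by simp
  next
    case False
    then have "(\<Sum>u\<in>V - {v}. if u = r \<and> v \<noteq> r then 1 else (0::real)) = (\<Sum>u\<in>V - {v}. if u = r then 1 else 0)"
      by simp
    also have "\<dots> = 1" using assms False by (simp add: sum.delta)
    finally show ?thesis using False by simp
  qed
  have xc: "x_constraints V r (\<lambda>u v. if u = r \<and> v \<noteq> r then 1 else 0)"
    unfolding x_constraints_def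
  proof (intro conjI ballI allI impI)
    fix v assume vV: "v \<in> V"
    show "(\<Sum>u\<in>V - {v}. if u = r \<and> v \<noteq> r then 1 else (0::real)) \<le> 1" using s1[OF vV] by simp
  next
    fix v w assume "v \<in> V - {r}" "w \<in> V - {v}"
    have "0 \<le> (\<Sum>u\<in>V - {v, w}. if u = r \<and> v \<noteq> r then 1 else (0::real))" by (rule sum_nonneg) simp
    then show "(if v = r \<and> w \<noteq> r then 1 else (0::real)) \<le> (\<Sum>u\<in>V - {v, w}. if u = r \<and> v \<noteq> r then 1 else 0)"
      using \<open>v \<in> V - {r}\<close> by simp
  next
    fix v assume a: "v \<in> V - {r}"
    then have vV: "v \<in> V" by simp
    show "1 \<le> (\<Sum>u\<in>V - {v}. if u = r \<and> v \<noteq> r then 1 else (0::real))" using s1[OF vV] a by simp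
  qed (auto)
  show ?thesis unfolding P_HSTP_def using xc assms by auto
qed

lemma A_xc: "A_HSTP V r H x y \<Longrightarrow> x_constraints V r x"
  unfolding A_HSTP_def by blast

lemma part1:
  assumes inst: "hmstp_instance V c r H"
  shows "nu_A V c r H \<le> nu_P V c r H"
proof -
  have fin: "finite V" and rV: "r \<in> V" and H1: "1 \<le> H" using inst unfolding hmstp_instance_def by auto
  let ?SP = "{hstp_cost V c x | x l g. P_HSTP V r H x l g}"
  let ?SA = "{hstp_cost V c x | x y. A_HSTP V r H x y}"
  have sub: "?SP \<subseteq> ?SA"
  proof
    fix s assume "s \<in> ?SP"
    then obtain x l g where s: "s = hstp_cost V c x" and P: "P_HSTP V r H x l g" by auto
    interpret ctx V r H x l g using fin rV H1 P by unfold_locales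
    show "s \<in> ?SA" using s A_exists by blast
  qed
  have ne: "?SP \<noteq> {}" using star_P[OF fin rV H1] by blast
  have bdd: "bdd_below ?SA"
  proof (rule bdd_belowI)
    fix s assume "s \<in> ?SA"
    then obtain x y where s: "s = hstp_cost V c x" and A: "A_HSTP V r H x y" by auto
    show "0 \<le> s" unfolding s by (rule cost_nonneg[OF inst A_xc[OF A]])
  qed
  show ?thesis unfolding nu_A_def nu_P_def by (rule cInf_superset_mono[OF ne bdd sub])
qed


definition cst :: "nat set \<Rightarrow> real" where
  "cst S = (if 0 \<in> S then (if 1 \<in> S then 9 else if 2 \<in> S then 10 else 7)
            else if 1 \<in> S then (if 2 \<in> S then 8 else 9) else 6)"

definition xA :: "nat \<Rightarrow> nat \<Rightarrow> real" where
  "xA u v = (if u = 0 \<and> v = 3 then 2/3 else if u = 1 \<and> v = 2 then 1/3 else if u = 2 \<and> v = 1 then 2/3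
     else if u = 2 \<and> v = 3 then 1/3 else if u = 3 \<and> v = 1 then 1/3 else if u = 3 \<and> v = 2 then 2/3 else 0)"

definition yA :: "nat \<Rightarrow> nat \<Rightarrow> real" where
  "yA v i = (if v = 0 then (if i = 0 then 1 else 0)
     else if v = 1 then (if i = 1 then 1/3 else if i = 2 then 2/3 else 0)
     else (if i = 1 then 2/3 else if i = 2 then 1/3 else 0))"

lemma inst: "hmstp_instance {0,1,2,3::nat} cst 0 2"
  unfolding hmstp_instance_def cst_def by auto


lemma sum12: "(\<Sum>i=(1::nat)..2. h i) = h 1 + h 2"
proof -
  have "{1..2::nat} = {1,2}" by auto
  then show ?thesis by simp
qed

lemma A_pt: "A_HSTP {0,1,2,3::nat} 0 2 xA yA"
  unfolding A_HSTP_def x_constraints_def xA_def yA_def sum12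
  by (simp add: insert_Diff_if)

lemma costA: "hstp_cost {0,1,2,3::nat} cst xA = 65/3"
  by (simp add: cost_expand insert_Diff_if cst_def xA_def)

lemma lowerP:
  assumes P: "P_HSTP {0,1,2,3::nat} 0 2 x l g"
  shows "22 \<le> hstp_cost {0,1,2,3::nat} cst x"
proof -
  interpret ctx "{0,1,2,3::nat}" 0 2 x l g using P by unfold_locales auto

  have n01: "0 \<le> x 0 1" using x01[of 0 1] by simp
  have n02: "0 \<le> x 0 2" using x01[of 0 2] by simp
  have n03: "0 \<le> x 0 3" using x01[of 0 3] by simp
  have n10: "0 \<le> x 1 0" using x01[of 1 0] by simp
  have n12: "0 \<le> x 1 2" using x01[of 1 2] by simp
  have n13: "0 \<le> x 1 3" using x01[of 1 3] by simp
  have n20: "0 \<le> x 2 0" using x01[of 2 0] by simp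
  have n21: "0 \<le> x 2 1" using x01[of 2 1] by simp
  have n23: "0 \<le> x 2 3" using x01[of 2 3] by simp
  have n30: "0 \<le> x 3 0" using x01[of 3 0] by simp
  have n31: "0 \<le> x 3 1" using x01[of 3 1] by simp
  have n32: "0 \<le> x 3 2" using x01[of 3 2] by simp
  have d1: "(\<Sum>u\<in>{0,1,2,3}-{1::nat}. x u 1) = 1" using indeg[of 1] by simp
  have e1: "x 0 1 + x 2 1 + x 3 1 = 1" using d1 by (simp add: insert_Diff_if)
  have d2: "(\<Sum>u\<in>{0,1,2,3}-{2::nat}. x u 2) = 1" using indeg[of 2] by simp
  have e2: "x 0 2 + x 1 2 + x 3 2 = 1" using d2 by (simp add: insert_Diff_if)
  have d3: "(\<Sum>u\<in>{0,1,2,3}-{3::nat}. x u 3) = 1" using indeg[of 3] by simp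
  have e3: "x 0 3 + x 1 3 + x 2 3 = 1" using d3 by (simp add: insert_Diff_if)
  have a12: "x 1 2 \<le> l 1 1 + 1 - l 2 2" using F4[of 1 2 1] by (simp add: numeral_2_eq_2)
  have b12: "x 1 2 \<le> l 1 2" using F6[of 1 2] by simp
  have a13: "x 1 3 \<le> l 1 1 + 1 - l 3 2" using F4[of 1 3 1] by (simp add: numeral_2_eq_2)
  have b13: "x 1 3 \<le> l 1 2" using F6[of 1 3] by simp
  have a21: "x 2 1 \<le> l 2 1 + 1 - l 1 2" using F4[of 2 1 1] by (simp add: numeral_2_eq_2)
  have b21: "x 2 1 \<le> l 2 2" using F6[of 2 1] by simp
  have a23: "x 2 3 \<le> l 2 1 + 1 - l 3 2" using F4[of 2 3 1] by (simp add: numeral_2_eq_2)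
  have b23: "x 2 3 \<le> l 2 2" using F6[of 2 3] by simp
  have a31: "x 3 1 \<le> l 3 1 + 1 - l 1 2" using F4[of 3 1 1] by (simp add: numeral_2_eq_2)
  have b31: "x 3 1 \<le> l 3 2" using F6[of 3 1] by simp
  have a32: "x 3 2 \<le> l 3 1 + 1 - l 2 2" using F4[of 3 2 1] by (simp add: numeral_2_eq_2)
  have b32: "x 3 2 \<le> l 3 2" using F6[of 3 2] by simp
  have z1: "l 1 1 = 0" using lv1[of 1] by simp
  have w1: "l 1 2 \<le> 1" using l01[of 1 2] by simp
  have z2: "l 2 1 = 0" using lv1[of 2] by simp
  have w2: "l 2 2 \<le> 1" using l01[of 2 2] by simp
  have z3: "l 3 1 = 0" using lv1[of 3] by simp
  have w3: "l 3 2 \<le> 1" using l01[of 3 2] by simp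
  have c: "hstp_cost {0,1,2,3::nat} cst x = cst {0,1} * x 0 1 + cst {0,2} * x 0 2 + cst {0,3} * x 0 3 + cst {1,0} * x 1 0 + cst {1,2} * x 1 2 + cst {1,3} * x 1 3 + cst {2,0} * x 2 0 + cst {2,1} * x 2 1 + cst {2,3} * x 2 3 + cst {3,0} * x 3 0 + cst {3,1} * x 3 1 + cst {3,2} * x 3 2"
    by (simp add: cost_expand insert_Diff_if algebra_simps)
  have c2: "hstp_cost {0,1,2,3::nat} cst x = 9 * x 0 1 + 10 * x 0 2 + 7 * x 0 3 + 9 * x 1 0 + 8 * x 1 2 + 9 * x 1 3 + 10 * x 2 0 + 8 * x 2 1 + 6 * x 2 3 + 7 * x 3 0 + 9 * x 3 1 + 6 * x 3 2"
    using c by (simp add: cst_def)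
  have s1: "x 2 1 + x 2 3 + 2 * x 3 2 \<le> 2" using a32 a23 b21 b32 z2 z3 by linarith
  have c3: "hstp_cost {0,1,2,3::nat} cst x = 9 * (x 0 1 + x 2 1 + x 3 1) + 8 * (x 0 2 + x 1 2 + x 3 2) + 7 * (x 0 3 + x 1 3 + x 2 3)
     + 2 * x 0 2 + 2 * x 1 3 - x 2 1 - x 2 3 - 2 * x 3 2 + 9 * x 1 0 + 10 * x 2 0 + 7 * x 3 0"
    unfolding c2 by (simp add: algebra_simps)
  have e1': "x 0 1 + x 2 1 + x 3 1 = 1" using e1 by simp
  have e2': "x 0 2 + x 1 2 + x 3 2 = 1" using e2 by simp
  have e3': "x 0 3 + x 1 3 + x 2 3 = 1" using e3 by simp
  have c4: "hstp_cost {0,1,2,3::nat} cst x = 24 + 2 * x 0 2 + 2 * x 1 3 - (x 2 1 + x 2 3 + 2 * x 3 2) + 9 * x 1 0 + 10 * x 2 0 + 7 * x 3 0"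
    unfolding c3 e1' e2' e3' by simp
  show ?thesis unfolding c4 using s1 n02 n13 n10 n20 n30 by linarith
qed


lemma part2: "\<exists>(V :: nat set) c r H. hmstp_instance V c r H \<and> nu_P V c r H > nu_A V c r H"
proof (intro exI conjI)
  show "hmstp_instance {0,1,2,3::nat} cst 0 2" by (rule inst)
  let ?SP = "{hstp_cost {0,1,2,3::nat} cst x | x l g. P_HSTP {0,1,2,3::nat} 0 2 x l g}"
  let ?SA = "{hstp_cost {0,1,2,3::nat} cst x | x y. A_HSTP {0,1,2,3::nat} 0 2 x y}"
  have bdd: "bdd_below ?SA"
  proof (rule bdd_belowI)
    fix s assume "s \<in> ?SA"
    then obtain x y where s: "s = hstp_cost {0,1,2,3::nat} cst x" and A: "A_HSTP {0,1,2,3::nat} 0 2 x y" by auto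
    show "0 \<le> s" unfolding s by (rule cost_nonneg[OF inst A_xc[OF A]])
  qed
  have mem: "hstp_cost {0,1,2,3::nat} cst xA \<in> ?SA" using A_pt by blast
  have "nu_A {0,1,2,3::nat} cst 0 2 \<le> hstp_cost {0,1,2,3::nat} cst xA"
    unfolding nu_A_def by (rule cInf_lower[OF mem bdd])
  then have "nu_A {0,1,2,3::nat} cst 0 2 \<le> 65/3" using costA by simp
  moreover have "22 \<le> nu_P {0,1,2,3::nat} cst 0 2"
  proof -
    have st: "P_HSTP {0,1,2,3::nat} 0 2 (\<lambda>u v. if u = 0 \<and> v \<noteq> 0 then 1 else 0)
     (\<lambda>v i. if v = 0 then (if 1 \<le> i then 1 else 0) else (if 2 \<le> i then 1 else 0))
     (\<lambda>i v. if v = 0 then 0 else (if i = 0 then 1 else 0))"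
      by (rule star_P) auto
    have ne: "?SP \<noteq> {}" using st by blast
    have "22 \<le> Inf ?SP"
    proof (rule cInf_greatest[OF ne])
      fix s assume "s \<in> ?SP"
      then obtain x l g where "s = hstp_cost {0,1,2,3::nat} cst x" "P_HSTP {0,1,2,3::nat} 0 2 x l g" by blast
      then show "22 \<le> s" using lowerP by simp
    qed
    then show ?thesis unfolding nu_P_def .
  qed
  ultimately show "nu_P {0,1,2,3::nat} cst 0 2 > nu_A {0,1,2,3::nat} cst 0 2" by simp
qed

theorem theorem4:
  shows "(\<forall>(V :: 'a set) c r H. hmstp_instance V c r H \<longrightarrow> nu_P V c r H \<ge> nu_A V c r H) \<and>
         (\<exists>(V :: nat set) c r H. hmstp_instance V c r H \<and> nu_P V c r H > nu_A V c r H)"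
  using part1 part2 by blast


end
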